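(* Fix $M,N\ge1$, $\kappa_{\mathrm{BS}},\kappa_{\mathrm{UE}}>0$, $\sigma^2>0$, and time fractions $0<\tau^{\mathrm{down}}_{\mathrm{data}}\le\tau$. For $p_{\mathrm{BS}}>0$ define the downlink capacity $$\mathrm{C}_{\mathrm{down}}(p_{\mathrm{BS}})=\frac{\tau^{\mathrm{down}}_{\mathrm{data}}}{\tau}\,\mathbb{E}\Big\{\max_{\theta_1,\dots,\theta_N\in[0,2\pi]}\log_2\Big(1+\frac{\widetilde{\mathbf{h}}^{\mathrm H}\widetilde{\mathbf{D}}^{-1}\widetilde{\mathbf{h}}}{1+\kappa_{\mathrm{UE}}\widetilde{\mathbf{h}}^{\mathrm H}\widetilde{\mathbf{D}}^{-1}\widetilde{\mathbf{h}}}\Big)\Big\},\qquad \widetilde{\mathbf{D}}=(1+\kappa_{\mathrm{UE}})\kappa_{\mathrm{BS}}\operatorname{diag}(\widetilde{\mathbf{h}}\widetilde{\mathbf{h}}^{\mathrm H})+\frac{\sigma^2}{p_{\mathrm{BS}}}\mathbf{I},$$ where the expectation is over the random channels and IRS phase noise. Then the limit $\mathrm{C}^{p_{\mathrm{BS}}}_{\mathrm{down}}(\infty)=\lim_{p_{\mathrm{BS}}\to\infty}\mathrm{C}_{\mathrm{down}}(p_{\mathrm{BS}})$ is finite and satisfies $$\frac{\tau^{\mathrm{down}}_{\mathrm{data}}}{\tau}\log_2\Big(1+\frac{1}{\kappa_{\mathrm{BS}}+\kappa_{\mathrm{UE}}(1+\kappa_{\mathrm{BS}})}\Big)\le \mathrm{C}^{p_{\mathrm{BS}}}_{\mathrm{down}}(\infty)\le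 \frac{\tau^{\mathrm{down}}_{\mathrm{data}}}{\tau}\log_2\Big(1+\frac{M}{\kappa_{\mathrm{BS}}+\kappa_{\mathrm{UE}}(M+\kappa_{\mathrm{BS}})}\Big).$$
   Context: IRS-assisted system: an $M$-antenna BS, a single-antenna user, and an IRS with $N$ reflecting elements. $\mathbf{h}_{\mathrm d}\sim\mathcal{CN}(\mathbf 0,\mathbf{C}_{\mathrm d})$ is the direct BS–user channel, $\mathbf{G}\in\mathbb{C}^{M\times N}$ the BS–IRS channel and $\mathbf{h}_{\mathrm r}\in\mathbb{C}^N$ the IRS–user channel, with cascaded channel $\mathbf{H}_{\mathrm{IRS}}=\mathbf{G}\operatorname{diag}(\mathbf{h}_{\mathrm r})\sim\mathcal{CN}(\mathbf 0,\mathbf{C}_{\mathrm{IRS}})$ (circularly symmetric complex Gaussian). The IRS matrix with phase noise is $\widetilde{\mathbf{\Phi}}=\operatorname{diag}(e^{j(\theta_1+\Delta\theta_1)},\dots,e^{j(\theta_N+\Delta\theta_N)})$, where the $\theta_i\in[0,2\pi]$ are the chosen phase shifts and the phase noises $\Delta\theta_i$ are random on $[-\pi,\pi)$ with circular mean direction zero and density symmetric about zero. The overall channel is $\widetilde{\mathbf{h}}=\mathbf{h}_{\mathrm d}+\mathbf{G}\widetilde{\mathbf{\Phi}}\mathbf{h}_{\mathrm r}$. $\kappa_{\mathrm{BS}},\kappa_{\mathrm{UE}}$ are the transceiver hardware-impairment levels at BS and user, $p_{\mathrm{BS}}$ the BS transmit power, $\sigma^2$ the receiver noise variance, $\tau$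 the coherence period and $\tau^{\mathrm{down}}_{\mathrm{data}}$ the downlink data phase length. $\operatorname{diag}(\mathbf{A})$ is the diagonal part of $\mathbf{A}$. *)

theory Defs
  imports "HOL-Probability.Probability"
begin

definition ctrans :: "complex^'n^'m \<Rightarrow> complex^'m^'n" where
  "ctrans A = (\<chi> i j. cnj (A $ j $ i))"

definition outer :: "complex^'m \<Rightarrow> complex^'m^'m" where
  "outer h = (\<chi> i j. h $ i * cnj (h $ j))"

definition diag_part :: "complex^'m^'m \<Rightarrow> complex^'m^'m" where
  "diag_part A = (\<chi> i j. if i = j then A $ i $ j else 0)"

definition diag_mat :: "complex^'n \<Rightarrow> complex^'n^'n" where
  "diag_mat v = (\<chi> i j. if i = j then v $ i else 0)"

definition herm_form :: "complex^'m \<Rightarrow> complex^'m^'m \<Rightarrow> complex^'m \<Rightarrow> complex" where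
  "herm_form x A y = (\<Sum>i\<in>UNIV. cnj (x $ i) * (A *v y) $ i)"

definition vec_mat :: "complex^'n^'m \<Rightarrow> complex^('m \<times> 'n)" where
  "vec_mat H = (\<chi> p. H $ fst p $ snd p)"

text \<open>A random vector z is CN(0,C) iff, almost surely, z = A w with C = A A^H, where
  the real and imaginary parts of the components of w are independent N(0,1/2) variables
  (i.e. w has i.i.d. standard circularly symmetric complex Gaussian entries).\<close>
definition complex_gaussian ::
  "'a measure \<Rightarrow> complex^'k^'k \<Rightarrow> ('a \<Rightarrow> complex^'k) \<Rightarrow> bool" where
  "complex_gaussian P C z \<longleftrightarrow>
     z \<in> borel_measurable P \<and>
     (\<exists>(A :: complex^'k^'k) (w :: 'a \<Rightarrow> complex^'k).
        C = A ** ctrans A \<and>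
        prob_space.indep_vars P (\<lambda>_. borel)
          (\<lambda>(i, b) \<omega>. if b then Re (w \<omega> $ i) else Im (w \<omega> $ i)) UNIV \<and>
        (\<forall>i. distributed P lborel (\<lambda>\<omega>. Re (w \<omega> $ i)) (\<lambda>x. ennreal (normal_density 0 (sqrt (1/2)) x))) \<and>
        (\<forall>i. distributed P lborel (\<lambda>\<omega>. Im (w \<omega> $ i)) (\<lambda>x. ennreal (normal_density 0 (sqrt (1/2)) x))) \<and>
        (AE \<omega> in P. z \<omega> = A *v w \<omega>))"

text \<open>A phase noise: random on [-pi,pi) with a density symmetric about zero and circular
  mean direction zero, i.e. E[e^{j X}] is a positive real number.\<close>
definition phase_noise :: "'a measure \<Rightarrow> ('a \<Rightarrow> real) \<Rightarrow> bool" where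
  "phase_noise P X \<longleftrightarrow>
     (\<exists>f. distributed P lborel X f \<and>
          (\<forall>x. x \<notin> {-pi..<pi} \<longrightarrow> f x = 0) \<and>
          (\<forall>x. f (-x) = f x)) \<and>
     (\<exists>\<rho>>0. integral\<^sup>L P (\<lambda>\<omega>. cis (X \<omega>)) = complex_of_real \<rho>)"

definition irs_matrix :: "real^'n \<Rightarrow> real^'n \<Rightarrow> complex^'n^'n" where
  "irs_matrix \<theta> d\<theta> = diag_mat (\<chi> i. cis (\<theta> $ i + d\<theta> $ i))"

definition overall_channel ::
  "complex^'m \<Rightarrow> complex^'n^'m \<Rightarrow> complex^'n \<Rightarrow> real^'n \<Rightarrow> real^'n \<Rightarrow> complex^'m" where
  "overall_channel h_d G hr \<theta> d\<theta> = h_d + G *v (irs_matrix \<theta> d\<theta> *v hr)"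

definition Dmat :: "real \<Rightarrow> real \<Rightarrow> real \<Rightarrow> real \<Rightarrow> complex^'m \<Rightarrow> complex^'m^'m" where
  "Dmat kBS kUE sigma2 p h =
     ((1 + kUE) * kBS) *\<^sub>R diag_part (outer h) + (sigma2 / p) *\<^sub>R mat 1"

definition quad :: "real \<Rightarrow> real \<Rightarrow> real \<Rightarrow> real \<Rightarrow> complex^'m \<Rightarrow> real" where
  "quad kBS kUE sigma2 p h = Re (herm_form h (matrix_inv (Dmat kBS kUE sigma2 p h)) h)"

definition phase_set :: "(real^'n) set" where
  "phase_set = {\<theta>. \<forall>i. \<theta> $ i \<in> {0..2*pi}}"

definition C_down ::
  "'a measure \<Rightarrow> ('a \<Rightarrow> complex^'m) \<Rightarrow> ('a \<Rightarrow> complex^'n^'m) \<Rightarrow> ('a \<Rightarrow> complex^'n)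
   \<Rightarrow> ('a \<Rightarrow> real^'n) \<Rightarrow> real \<Rightarrow> real \<Rightarrow> real \<Rightarrow> real \<Rightarrow> real \<Rightarrow> real \<Rightarrow> real" where
  "C_down P h_d G hr d\<theta> kBS kUE sigma2 tau_d tau p =
     tau_d / tau * integral\<^sup>L P (\<lambda>\<omega>.
        SUP \<theta>\<in>phase_set.
          (let q = quad kBS kUE sigma2 p (overall_channel (h_d \<omega>) (G \<omega>) (hr \<omega>) \<theta> (d\<theta> \<omega>))
           in log 2 (1 + q / (1 + kUE * q))))"

end

theory Submission
  imports Defs
begin


lemma point_null:
  fixes X :: "'a \<Rightarrow> real"
  assumes "distributed P lborel X f"
  shows "emeasure P (X -` {x0} \<inter> space P) = 0"
proof -
  have "emeasure P (X -` {x0} \<inter> space P) = (\<integral>\<^sup>+x. f x * indicator {x0} x \<partial>lborel)"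
    by (rule distributed_emeasure[OF assms]) simp
  also have "\<dots> = (\<integral>\<^sup>+(x::real). 0 \<partial>lborel)"
    using AE_lborel_singleton[of x0] by (intro nn_integral_cong_AE) (auto elim!: eventually_mono)
  finally show ?thesis by simp
qed

lemma lin_nonzero_AE:
  fixes V :: "'t::finite \<Rightarrow> 'a \<Rightarrow> real" and a :: "'t \<Rightarrow> real"
  assumes P: "prob_space P" and ind: "prob_space.indep_vars P (\<lambda>_. borel) V UNIV"
    and a0: "a t0 \<noteq> 0" and d: "distributed P lborel (V t0) f"
  shows "AE \<omega> in P. (\<Sum>t\<in>UNIV. a t * V t \<omega>) \<noteq> 0"
proof -
  interpret prob_space P by fact
  let ?A = "UNIV - {t0}"
  define Z where "Z = (\<lambda>\<omega>. \<Sum>t\<in>?A. a t * V t \<omega>)"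
  define X where "X = V t0"
  have rv: "\<And>t. V t \<in> borel_measurable P" using ind by (auto simp: indep_vars_def)
  have iv: "indep_var (PiM ?A (\<lambda>_. borel)) (\<lambda>\<omega>. restrict (\<lambda>i. V i \<omega>) ?A) (PiM {t0} (\<lambda>_. borel)) (\<lambda>\<omega>. restrict (\<lambda>i. V i \<omega>) {t0})"
    by (rule indep_var_restrict[OF ind]) auto
  have m1: "(\<lambda>g. \<Sum>t\<in>?A. a t * g t) \<in> borel_measurable (PiM ?A (\<lambda>_. (borel::real measure)))"
    by measurable
  have m2: "(\<lambda>g. g t0) \<in> borel_measurable (PiM {t0} (\<lambda>_. (borel::real measure)))"
    by measurable
  have "indep_var borel ((\<lambda>g. \<Sum>t\<in>?A. a t * g t) \<circ> (\<lambda>\<omega>. restrict (\<lambda>i. V i \<omega>) ?A)) borel ((\<lambda>g. g t0) \<circ> (\<lambda>\<omega>. restrict (\<lambda>i. V i \<omega>) {t0}))"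
    by (rule indep_var_compose[OF iv m1 m2])
  also have "((\<lambda>g. \<Sum>t\<in>?A. a t * g t) \<circ> (\<lambda>\<omega>. restrict (\<lambda>i. V i \<omega>) ?A)) = Z"
    by (auto simp: Z_def fun_eq_iff intro!: sum.cong)
  also have "((\<lambda>g. g t0) \<circ> (\<lambda>\<omega>. restrict (\<lambda>i. V i \<omega>) {t0})) = X"
    by (auto simp: X_def fun_eq_iff)
  finally have iZX: "indep_var borel Z borel X" .
  have Zm: "Z \<in> borel_measurable P" and Xm: "X \<in> borel_measurable P"
    using rv unfolding Z_def X_def by auto
  define S where "S = {(z, x). z + a t0 * x = (0::real)}"
  have Ssets: "S \<in> sets (borel \<Otimes>\<^sub>M borel)"
  proof -
    have "(\<lambda>p::real\<times>real. fst p + a t0 * snd p) \<in> borel_measurable (borel \<Otimes>\<^sub>M borel)"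
      by measurable
    then have "(\<lambda>p::real\<times>real. fst p + a t0 * snd p) -` {0} \<inter> space (borel \<Otimes>\<^sub>M borel) \<in> sets (borel \<Otimes>\<^sub>M borel)"
      by (rule measurable_sets) simp
    moreover have "(\<lambda>p::real\<times>real. fst p + a t0 * snd p) -` {0} \<inter> space (borel \<Otimes>\<^sub>M borel) = S"
      by (auto simp: S_def space_pair_measure)
    ultimately show ?thesis by simp
  qed
  have eqd: "distr P borel Z \<Otimes>\<^sub>M distr P borel X = distr P (borel \<Otimes>\<^sub>M borel) (\<lambda>\<omega>. (Z \<omega>, X \<omega>))"
    using iZX indep_var_distribution_eq by blast
  have pt: "emeasure (distr P borel X) {x0} = 0" for x0
  proof -
    have "emeasure (distr P borel X) {x0} = emeasure P (X -` {x0} \<inter> space P)"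
      using Xm by (simp add: emeasure_distr)
    also have "\<dots> = 0" using point_null[OF d] unfolding X_def .
    finally show ?thesis .
  qed
  interpret sX: prob_space "distr P borel X" using Xm by (rule prob_space_distr)
  have "emeasure P {\<omega>\<in>space P. Z \<omega> + a t0 * X \<omega> = 0} = emeasure (distr P (borel \<Otimes>\<^sub>M borel) (\<lambda>\<omega>. (Z \<omega>, X \<omega>))) S"
    using Zm Xm Ssets by (subst emeasure_distr) (auto simp: S_def intro!: arg_cong[where f="emeasure P"])
  also have "\<dots> = emeasure (distr P borel Z \<Otimes>\<^sub>M distr P borel X) S" by (simp add: eqd)
  also have "\<dots> = (\<integral>\<^sup>+z. emeasure (distr P borel X) (Pair z -` S) \<partial>distr P borel Z)"
    using Ssets by (intro sX.emeasure_pair_measure_alt) simp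
  also have "\<dots> = (\<integral>\<^sup>+z. 0 \<partial>distr P borel Z)"
  proof (intro nn_integral_cong)
    fix z
    have "Pair z -` S = {- z / a t0}" using a0 by (auto simp: S_def field_simps)
    then show "emeasure (distr P borel X) (Pair z -` S) = 0" by (simp add: pt)
  qed
  finally have null: "emeasure P {\<omega>\<in>space P. Z \<omega> + a t0 * X \<omega> = 0} = 0" by simp
  have "AE \<omega> in P. Z \<omega> + a t0 * X \<omega> \<noteq> 0"
    using null Zm Xm by (subst AE_iff_measurable[OF _ refl]) auto
  moreover have "(\<Sum>t\<in>UNIV. a t * V t \<omega>) = Z \<omega> + a t0 * X \<omega>" for \<omega>
  proof -
    have "UNIV = insert t0 ?A" by auto
    then have "(\<Sum>t\<in>UNIV. a t * V t \<omega>) = (\<Sum>t\<in>insert t0 ?A. a t * V t \<omega>)" by simp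
    also have "\<dots> = a t0 * V t0 \<omega> + Z \<omega>" by (subst sum.insert) (auto simp: Z_def)
    finally show ?thesis by (simp add: X_def)
  qed
  ultimately show ?thesis by simp
qed


lemma matrix_inv_diag:
  fixes d :: "'m::finite \<Rightarrow> complex"
  assumes "\<And>i. d i \<noteq> 0"
  shows "matrix_inv (\<chi> i j. if i = j then d i else 0) = (\<chi> i j. if i = j then inverse (d i) else 0)"
proof -
  let ?D = "(\<chi> i j. if i = j then d i else 0) :: complex^'m^'m"
  let ?E = "(\<chi> i j. if i = j then inverse (d i) else 0) :: complex^'m^'m"
  have ent: "(\<Sum>k\<in>UNIV. (if i = k then a i else 0) * (if k = j then b k else 0)) = (if i = j then a i * b i else 0)"
    for i j and a b :: "'m \<Rightarrow> complex"
  proof -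
    have "\<And>k. (if i = k then a i else 0) * (if k = j then b k else 0) = (if i = k then a k * (if k = j then b k else 0) else 0)"
      by auto
    then show ?thesis by (simp add: sum.delta)
  qed
  have DE: "?D ** ?E = mat 1"
  unfolding vec_eq_iff proof (intro allI)
    fix i j show "(?D ** ?E) $ i $ j = mat 1 $ i $ j"
      using ent[of i d j "\<lambda>k. inverse (d k)"] assms[of i] by (auto simp add: matrix_matrix_mult_def mat_def)
  qed
  have ED: "?E ** ?D = mat 1"
  unfolding vec_eq_iff proof (intro allI)
    fix i j show "(?E ** ?D) $ i $ j = mat 1 $ i $ j"
      using ent[of i "\<lambda>k. inverse (d k)" j d] assms[of i] by (auto simp add: matrix_matrix_mult_def mat_def)
  qed
  have ex: "\<exists>B. ?D ** B = mat 1 \<and> B ** ?D = mat 1" using DE ED by blast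
  define B where "B = matrix_inv ?D"
  have B: "?D ** B = mat 1 \<and> B ** ?D = mat 1"
    unfolding B_def matrix_inv_def by (rule someI_ex[OF ex])
  have "B = B ** (?D ** ?E)" by (simp add: DE)
  also have "\<dots> = (B ** ?D) ** ?E" by (simp add: matrix_mul_assoc)
  also have "\<dots> = ?E" using B by simp
  finally show ?thesis by (simp add: B_def)
qed

lemma hc1: "z * cnj z = (complex_of_real (cmod z))\<^sup>2"
  by (metis complex_norm_square of_real_power norm_complex_def)
lemma hc2: "cnj z * z = (complex_of_real (cmod z))\<^sup>2"
  by (metis hc1 mult.commute)

lemma Dmat_eq:
  "Dmat kBS kUE sigma2 p h = (\<chi> i j. if i = j then complex_of_real ((1 + kUE) * kBS * (cmod (h $ i))\<^sup>2 + sigma2 / p) else 0)"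
  unfolding Dmat_def diag_part_def outer_def mat_def
  apply (simp add: vec_eq_iff)
  apply (simp add: hc1 scaleR_conv_of_real)
  done

lemma quad_eq:
  assumes "kBS > 0" "kUE > 0" "sigma2 > 0" "p > 0"
  shows "quad kBS kUE sigma2 p h = (\<Sum>i\<in>UNIV. (cmod (h $ i))\<^sup>2 / ((1 + kUE) * kBS * (cmod (h $ i))\<^sup>2 + sigma2 / p))"
proof -
  define d where "d i = (1 + kUE) * kBS * (cmod (h $ i))\<^sup>2 + sigma2 / p" for i
  have dpos: "d i > 0" for i using assms unfolding d_def
    by (intro add_nonneg_pos) auto
  have inv: "matrix_inv (Dmat kBS kUE sigma2 p h) = (\<chi> i j. if i = j then inverse (complex_of_real (d i)) else 0)"
    unfolding Dmat_eq d_def[symmetric] using dpos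
    by (intro matrix_inv_diag) (metis dpos less_irrefl of_real_eq_0_iff)
  have "herm_form h (matrix_inv (Dmat kBS kUE sigma2 p h)) h = (\<Sum>i\<in>UNIV. cnj (h $ i) * (inverse (complex_of_real (d i)) * h $ i))"
    unfolding herm_form_def inv
    by (simp add: matrix_vector_mult_def if_distrib if_distribR sum.delta cong: if_cong)
  also have "\<dots> = (\<Sum>i\<in>UNIV. complex_of_real ((cmod (h $ i))\<^sup>2 / d i))"
    by (intro sum.cong refl) (simp add: hc1 hc2 field_simps)
  finally show ?thesis unfolding quad_def d_def by (simp add: Re_sum)
qed


definition Qf :: "real \<Rightarrow> real \<Rightarrow> complex^'m::finite \<Rightarrow> real" where
  "Qf c s h = (\<Sum>i\<in>UNIV. (cmod (h $ i))\<^sup>2 / (c * (cmod (h $ i))\<^sup>2 + s))"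

definition kk :: "complex^'m::finite \<Rightarrow> nat" where
  "kk h = card {i. h $ i \<noteq> 0}"

definition Ff :: "real \<Rightarrow> real \<Rightarrow> real" where
  "Ff k q = log 2 (1 + q / (1 + k * q))"

lemma kk_le: "kk (h::complex^'m::finite) \<le> CARD('m)"
  unfolding kk_def by (rule card_mono) auto

lemma sum_if_card: "(\<Sum>i\<in>(UNIV::'m::finite set). if P i then a else 0) = real (card {i. P i}) * a"
proof -
  have "(\<Sum>i\<in>(UNIV::'m set). if P i then a else 0) = (\<Sum>i\<in>{i. P i}. a)"
    by (simp add: sum.If_cases Int_def)
  then show ?thesis by simp
qed

lemma Qf_nonneg: "c > 0 \<Longrightarrow> s > 0 \<Longrightarrow> 0 \<le> Qf c s h"
  unfolding Qf_def by (intro sum_nonneg divide_nonneg_pos) (auto intro: add_nonneg_pos)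

lemma Qf_le: assumes "c > 0" "s > 0" shows "Qf c s h \<le> real (kk h) / c"
proof -
  have "Qf c s h \<le> (\<Sum>i\<in>UNIV. if h $ i \<noteq> 0 then 1 / c else 0)"
    unfolding Qf_def
  proof (intro sum_mono)
    fix i
    show "(cmod (h $ i))\<^sup>2 / (c * (cmod (h $ i))\<^sup>2 + s) \<le> (if h $ i \<noteq> 0 then 1 / c else 0)"
    proof (cases "h $ i = 0")
      case False
      then have x: "(cmod (h $ i))\<^sup>2 > 0" by simp
      have d: "c * (cmod (h $ i))\<^sup>2 + s > 0" using x assms by (intro add_pos_pos) auto
      have "(cmod (h $ i))\<^sup>2 / (c * (cmod (h $ i))\<^sup>2 + s) \<le> 1 / c"
        using d assms by (simp add: divide_le_eq field_simps)
      then show ?thesis using False by simp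
    qed simp
  qed
  also have "\<dots> = real (kk h) / c" by (simp add: sum_if_card kk_def)
  finally show ?thesis .
qed

lemma Qf_mono: assumes "c > 0" "0 < s'" "s' \<le> s" shows "Qf c s h \<le> Qf c s' h"
  unfolding Qf_def
proof (intro sum_mono)
  fix i
  have "0 \<le> c * (cmod (h $ i))\<^sup>2" using assms by simp
  then show "(cmod (h $ i))\<^sup>2 / (c * (cmod (h $ i))\<^sup>2 + s) \<le> (cmod (h $ i))\<^sup>2 / (c * (cmod (h $ i))\<^sup>2 + s')"
    using assms by (intro divide_left_mono mult_pos_pos add_nonneg_pos) auto
qed

lemma Qf_tendsto:
  assumes "c > 0" "sigma2 > 0"
  shows "((\<lambda>p. Qf c (sigma2 / p) h) \<longlongrightarrow> real (kk h) / c) at_top"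
proof -
  have s0: "((\<lambda>p::real. sigma2 / p) \<longlongrightarrow> 0) at_top"
    by (intro tendsto_divide_0[OF tendsto_const] filterlim_at_top_imp_at_infinity filterlim_ident)
  have "((\<lambda>p. Qf c (sigma2 / p) h) \<longlongrightarrow> (\<Sum>i\<in>UNIV. if h $ i \<noteq> 0 then 1 / c else 0)) at_top"
    unfolding Qf_def
  proof (intro tendsto_sum)
    fix i
    show "((\<lambda>p. (cmod (h $ i))\<^sup>2 / (c * (cmod (h $ i))\<^sup>2 + sigma2 / p)) \<longlongrightarrow> (if h $ i \<noteq> 0 then 1 / c else 0)) at_top"
    proof (cases "h $ i = 0")
      case False
      then have x: "(cmod (h $ i))\<^sup>2 \<noteq> 0" by simp
      have "((\<lambda>p. (cmod (h $ i))\<^sup>2 / (c * (cmod (h $ i))\<^sup>2 + sigma2 / p)) \<longlongrightarrow> (cmod (h $ i))\<^sup>2 / (c * (cmod (h $ i))\<^sup>2 + 0)) at_top"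
        using x assms by (intro tendsto_intros s0) auto
      also have "(cmod (h $ i))\<^sup>2 / (c * (cmod (h $ i))\<^sup>2 + 0) = 1 / c" using x by simp
      finally show ?thesis using False by simp
    qed simp
  qed
  also have "(\<Sum>i\<in>UNIV. if h $ i \<noteq> 0 then 1 / c else 0) = real (kk h) / c" by (simp add: sum_if_card kk_def)
  finally show ?thesis .
qed

lemma Ff_mono: assumes "k > 0" "0 \<le> q" "q \<le> q'" shows "Ff k q \<le> Ff k q'"
proof -
  have 1: "q / (1 + k * q) \<le> q' / (1 + k * q')"
    using assms by (simp add: field_simps add_pos_nonneg)
  have "0 \<le> q / (1 + k * q)" using assms by simp
  then show ?thesis unfolding Ff_def using 1 by (intro log_mono) auto
qed

lemma Ff_nonneg: assumes "k > 0" "0 \<le> q" shows "0 \<le> Ff k q"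
  using Ff_mono[OF assms(1) order_refl assms(2)] by (simp add: Ff_def)

lemma Ff_tendsto:
  assumes "k > 0" "0 \<le> q" "(f \<longlongrightarrow> q) F"
  shows "((\<lambda>x. Ff k (f x)) \<longlongrightarrow> Ff k q) F"
proof -
  have a: "0 \<le> q / (1 + k * q)" using assms by simp
  have b: "1 + k * q > 0" using assms by (intro add_pos_nonneg) auto
  have c: "1 + q / (1 + k * q) > 0" using a by linarith
  show ?thesis unfolding Ff_def using assms b c
    by (intro tendsto_intros) auto
qed



lemma ch_comp:
  "overall_channel hdv G hr \<theta> d\<theta> $ m = hdv $ m + (\<Sum>n\<in>UNIV. G $ m $ n * (cis (\<theta> $ n + d\<theta> $ n) * hr $ n))"
proof -
  have "(irs_matrix \<theta> d\<theta> *v hr) $ n = cis (\<theta> $ n + d\<theta> $ n) * hr $ n" for n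
    unfolding irs_matrix_def diag_mat_def matrix_vector_mult_def
    by (simp add: if_distrib if_distribR cong: if_cong)
  then show ?thesis unfolding overall_channel_def by (simp add: matrix_vector_mult_def)
qed

lemma ch_vec:
  "overall_channel hdv G hr \<theta> d\<theta> = (\<chi> m. hdv $ m + (\<Sum>n\<in>UNIV. G $ m $ n * (cis (\<theta> $ n + d\<theta> $ n) * hr $ n)))"
  by (simp add: vec_eq_iff ch_comp)

lemma Qf_cont:
  assumes "c > 0" "s > 0" "k > 0"
  shows "continuous_on UNIV (\<lambda>h::complex^'m::finite. Ff k (Qf c s h))"
proof -
  have d: "c * (cmod (h $ i))\<^sup>2 + s \<noteq> 0" for h :: "complex^'m" and i
    using assms by (metis add_nonneg_pos less_irrefl mult_nonneg_nonneg less_imp_le zero_le_power2)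
  have q: "0 \<le> Qf c s h" for h :: "complex^'m" using Qf_nonneg assms by blast
  have b: "1 + k * Qf c s h \<noteq> 0" for h :: "complex^'m" using q[of h] assms
    by (metis add_pos_nonneg less_irrefl mult_nonneg_nonneg less_imp_le zero_less_one)
  have a: "0 < 1 + Qf c s h / (1 + k * Qf c s h)" for h :: "complex^'m"
  proof -
    have "1 + k * Qf c s h > 0" using q[of h] assms by (intro add_pos_nonneg) auto
    then have "0 \<le> Qf c s h / (1 + k * Qf c s h)" using q[of h] by simp
    then show ?thesis by linarith
  qed
  have a2: "1 + Qf c s h / (1 + k * Qf c s h) \<noteq> 0" for h :: "complex^'m"
    using a[of h] by linarith
  show ?thesis unfolding Ff_def Qf_def[symmetric]
    unfolding Qf_def
    using d b[unfolded Qf_def] a[unfolded Qf_def] a2[unfolded Qf_def]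
    by (intro continuous_intros) auto
qed

lemma ch_cont:
  "continuous_on UNIV (\<lambda>x::(complex^'m::finite) \<times> (complex^'n::finite^'m) \<times> (complex^'n) \<times> (real^'n).
      overall_channel (fst x) (fst (snd x)) (fst (snd (snd x))) \<theta> (snd (snd (snd x))))"
  unfolding ch_vec by (intro continuous_intros)

lemma ch_nonzero:
  fixes hdv :: "complex^'m::finite" and G :: "complex^'n::finite^'m"
  assumes "hdv \<noteq> 0 \<or> G ** diag_mat hr \<noteq> 0"
  shows "\<exists>\<theta>\<in>phase_set. overall_channel hdv G hr \<theta> d\<theta> \<noteq> 0"
proof (rule ccontr)
  assume "\<not> ?thesis"
  then have z: "\<And>\<theta>. \<theta> \<in> phase_set \<Longrightarrow> overall_channel hdv G hr \<theta> d\<theta> $ m = 0" for m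
    by auto
  have p0: "(0::real^'n) \<in> phase_set" by (simp add: phase_set_def)
  have H0: "G $ m $ n * hr $ n = 0" for m n
  proof -
    define \<theta>n :: "real^'n" where "\<theta>n = (\<chi> i. if i = n then pi else 0)"
    have pn: "\<theta>n \<in> phase_set" by (simp add: phase_set_def \<theta>n_def)
    have "overall_channel hdv G hr \<theta>n d\<theta> $ m - overall_channel hdv G hr 0 d\<theta> $ m =
      (\<Sum>i\<in>UNIV. G $ m $ i * (cis (\<theta>n $ i + d\<theta> $ i) * hr $ i) - G $ m $ i * (cis (0 + d\<theta> $ i) * hr $ i))"
      unfolding ch_comp by (simp add: sum_subtractf)
    also have "\<dots> = (\<Sum>i\<in>UNIV. if i = n then - 2 * cis (d\<theta> $ n) * (G $ m $ n * hr $ n) else 0)"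
    proof (intro sum.cong refl)
      fix i
      have "cis (pi + d\<theta> $ n) = - cis (d\<theta> $ n)" by (simp add: cis_mult[symmetric])
      then show "G $ m $ i * (cis (\<theta>n $ i + d\<theta> $ i) * hr $ i) - G $ m $ i * (cis (0 + d\<theta> $ i) * hr $ i) =
        (if i = n then - 2 * cis (d\<theta> $ n) * (G $ m $ n * hr $ n) else 0)"
        by (auto simp: \<theta>n_def algebra_simps)
    qed
    also have "\<dots> = - 2 * cis (d\<theta> $ n) * (G $ m $ n * hr $ n)" by simp
    finally have "- 2 * cis (d\<theta> $ n) * (G $ m $ n * hr $ n) = 0" using z[OF pn] z[OF p0] by simp
    then show ?thesis by simp
  qed
  have "G ** diag_mat hr = 0"
    using H0 by (simp add: vec_eq_iff matrix_matrix_mult_def diag_mat_def if_distrib if_distribR cong: if_cong)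
  moreover have "hdv = 0"
  proof -
    have "hdv $ m = 0" for m using z[OF p0, of m] H0 unfolding ch_comp
      by (simp add: mult.left_commute[of _ "cis _"])
    then show ?thesis by (simp add: vec_eq_iff)
  qed
  ultimately show False using assms by simp
qed


lemma kk_fin: "finite ((\<lambda>\<theta>. kk (H \<theta> :: complex^'m::finite)) ` \<Theta>)"
  by (rule finite_subset[of _ "{..CARD('m)}"]) (auto simp: kk_le)

lemma sup_term_le:
  fixes H :: "'t \<Rightarrow> complex^'m::finite"
  assumes "c > 0" "k > 0" "s > 0" "\<theta> \<in> \<Theta>"
  shows "Ff k (Qf c s (H \<theta>)) \<le> Ff k (real (Max ((\<lambda>\<theta>. kk (H \<theta>)) ` \<Theta>)) / c)"
proof -
  have "kk (H \<theta>) \<le> Max ((\<lambda>\<theta>. kk (H \<theta>)) ` \<Theta>)" using assms kk_fin by (intro Max_ge) auto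
  then have "real (kk (H \<theta>)) / c \<le> real (Max ((\<lambda>\<theta>. kk (H \<theta>)) ` \<Theta>)) / c"
    using assms by (intro divide_right_mono) auto
  then have "Qf c s (H \<theta>) \<le> real (Max ((\<lambda>\<theta>. kk (H \<theta>)) ` \<Theta>)) / c"
    using Qf_le[OF assms(1,3), of "H \<theta>"] by linarith
  then show ?thesis using assms by (intro Ff_mono Qf_nonneg) auto
qed

lemma sup_bounds:
  fixes H :: "'t \<Rightarrow> complex^'m::finite"
  assumes "c > 0" "k > 0" "s > 0" "\<Theta> \<noteq> {}"
  shows "0 \<le> (SUP \<theta>\<in>\<Theta>. Ff k (Qf c s (H \<theta>)))"
    and "(SUP \<theta>\<in>\<Theta>. Ff k (Qf c s (H \<theta>))) \<le> Ff k (real (Max ((\<lambda>\<theta>. kk (H \<theta>)) ` \<Theta>)) / c)"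
    and "bdd_above ((\<lambda>\<theta>. Ff k (Qf c s (H \<theta>))) ` \<Theta>)"
proof -
  show b: "bdd_above ((\<lambda>\<theta>. Ff k (Qf c s (H \<theta>))) ` \<Theta>)"
    by (rule bdd_aboveI2[where M="Ff k (real (Max ((\<lambda>\<theta>. kk (H \<theta>)) ` \<Theta>)) / c)"])
       (rule sup_term_le[OF assms(1-3)])
  show "(SUP \<theta>\<in>\<Theta>. Ff k (Qf c s (H \<theta>))) \<le> Ff k (real (Max ((\<lambda>\<theta>. kk (H \<theta>)) ` \<Theta>)) / c)"
    using sup_term_le[OF assms(1-3), where H=H and \<Theta>=\<Theta>] assms(4) by (intro cSUP_least) auto
  obtain \<theta> where t: "\<theta> \<in> \<Theta>" using assms(4) by auto
  have "0 \<le> Ff k (Qf c s (H \<theta>))" using assms by (intro Ff_nonneg Qf_nonneg) auto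
  also have "\<dots> \<le> (SUP \<theta>\<in>\<Theta>. Ff k (Qf c s (H \<theta>)))" using b t by (rule cSUP_upper2) simp
  finally show "0 \<le> (SUP \<theta>\<in>\<Theta>. Ff k (Qf c s (H \<theta>)))" .
qed

lemma sup_lim:
  fixes H :: "'t \<Rightarrow> complex^'m::finite"
  assumes c: "c > 0" and k: "k > 0" and s: "sigma2 > 0" and ne: "\<Theta> \<noteq> {}"
  shows "((\<lambda>p. SUP \<theta>\<in>\<Theta>. Ff k (Qf c (sigma2 / p) (H \<theta>))) \<longlongrightarrow> Ff k (real (Max ((\<lambda>\<theta>. kk (H \<theta>)) ` \<Theta>)) / c)) at_top"
proof -
  let ?K = "Max ((\<lambda>\<theta>. kk (H \<theta>)) ` \<Theta>)"
  have "?K \<in> (\<lambda>\<theta>. kk (H \<theta>)) ` \<Theta>" using ne kk_fin by (intro Max_in) auto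
  then obtain \<theta>0 where t0: "\<theta>0 \<in> \<Theta>" "kk (H \<theta>0) = ?K" by auto
  have low: "((\<lambda>p. Ff k (Qf c (sigma2 / p) (H \<theta>0))) \<longlongrightarrow> Ff k (real ?K / c)) at_top"
    using Ff_tendsto[OF k _ Qf_tendsto[OF c s, of "H \<theta>0"]] c t0 by simp
  show ?thesis
  proof (rule tendsto_sandwich[OF _ _ low tendsto_const])
    have "eventually (\<lambda>p::real. p > 0) at_top" by (rule eventually_gt_at_top)
    then show "\<forall>\<^sub>F p in at_top. Ff k (Qf c (sigma2 / p) (H \<theta>0)) \<le> (SUP \<theta>\<in>\<Theta>. Ff k (Qf c (sigma2 / p) (H \<theta>)))"
    proof eventually_elim
      case (elim p)
      then have "sigma2 / p > 0" using s by simp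
      then show ?case using sup_bounds(3)[OF c k _ ne] t0 by (intro cSUP_upper) auto
    qed
    from \<open>eventually (\<lambda>p::real. p > 0) at_top\<close>
    show "\<forall>\<^sub>F p in at_top. (SUP \<theta>\<in>\<Theta>. Ff k (Qf c (sigma2 / p) (H \<theta>))) \<le> Ff k (real ?K / c)"
    proof eventually_elim
      case (elim p)
      then have "sigma2 / p > 0" using s by simp
      then show ?case using sup_bounds(2)[OF c k _ ne] by auto
    qed
  qed
qed


lemma gauss_nonzero_AE:
  fixes z :: "'a \<Rightarrow> complex^'k::finite"
  assumes P: "prob_space P" and g: "complex_gaussian P C z" and C: "C \<noteq> 0"
  shows "AE \<omega> in P. z \<omega> \<noteq> 0"
proof -
  interpret prob_space P by fact
  obtain A :: "complex^'k^'k" and w :: "'a \<Rightarrow> complex^'k" where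
    CA: "C = A ** ctrans A" and
    ind: "indep_vars (\<lambda>_. borel) (\<lambda>(i, b) \<omega>. if b then Re (w \<omega> $ i) else Im (w \<omega> $ i)) UNIV" and
    dR: "\<And>i. distributed P lborel (\<lambda>\<omega>. Re (w \<omega> $ i)) (\<lambda>x. ennreal (normal_density 0 (sqrt (1/2)) x))" and
    dI: "\<And>i. distributed P lborel (\<lambda>\<omega>. Im (w \<omega> $ i)) (\<lambda>x. ennreal (normal_density 0 (sqrt (1/2)) x))" and
    ae: "AE \<omega> in P. z \<omega> = A *v w \<omega>"
    using g unfolding complex_gaussian_def by blast
  have "A \<noteq> 0" using C CA by auto
  then obtain i j where Aij: "A $ i $ j \<noteq> 0"
    by (metis vec_eq_iff zero_index)
  define V where "V = (\<lambda>(i, b) \<omega>. if b then Re (w \<omega> $ i) else Im (w \<omega> $ i))"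
  define a where "a = (\<lambda>(j, b). if b then Re (A $ i $ j) else - Im (A $ i $ j))"
  define t0 where "t0 = (if Re (A $ i $ j) \<noteq> 0 then (j, True) else (j, False))"
  have a0: "a t0 \<noteq> 0" using Aij by (auto simp: a_def t0_def complex_eq_iff)
  have d0: "distributed P lborel (V t0) (\<lambda>x. ennreal (normal_density 0 (sqrt (1/2)) x))"
    using dR dI by (auto simp: V_def t0_def)
  have ind': "indep_vars (\<lambda>_. borel) V UNIV" using ind by (simp add: V_def)
  have AE1: "AE \<omega> in P. (\<Sum>t\<in>UNIV. a t * V t \<omega>) \<noteq> 0"
    using lin_nonzero_AE[of P V a t0] P ind' a0 d0 by blast
  have re: "Re ((A *v w \<omega>) $ i) = (\<Sum>t\<in>UNIV. a t * V t \<omega>)" for \<omega>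
  proof -
    have "(\<Sum>t\<in>UNIV. a t * V t \<omega>) = (\<Sum>j\<in>UNIV. \<Sum>b\<in>UNIV. a (j, b) * V (j, b) \<omega>)"
      by (simp add: sum.cartesian_product UNIV_Times_UNIV[symmetric] del: UNIV_Times_UNIV)
    also have "\<dots> = (\<Sum>j\<in>UNIV. Re (A $ i $ j * w \<omega> $ j))"
      by (simp add: UNIV_bool a_def V_def)
    also have "\<dots> = Re ((A *v w \<omega>) $ i)"
      by (simp add: matrix_vector_mult_def Re_sum)
    finally show ?thesis by simp
  qed
  show ?thesis using AE1 ae
  proof eventually_elim
    case (elim \<omega>)
    then have "Re (z \<omega> $ i) \<noteq> 0" using re by simp
    then show ?case by auto
  qed
qed


lemma phase_set_ne: "phase_set \<noteq> {}"
proof -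
  have "(0::real^'n) \<in> phase_set" by (simp add: phase_set_def)
  then show ?thesis by auto
qed

lemma sup_meas:
  fixes X :: "'a \<Rightarrow> (complex^'m::finite) \<times> (complex^'n::finite^'m) \<times> (complex^'n) \<times> (real^'n)"
  assumes X: "X \<in> borel_measurable P" and c: "c > 0" and s: "s > 0" and k: "k > 0"
  shows "(\<lambda>\<omega>. SUP \<theta>\<in>phase_set. Ff k (Qf c s (overall_channel (fst (X \<omega>)) (fst (snd (X \<omega>))) (fst (snd (snd (X \<omega>)))) \<theta> (snd (snd (snd (X \<omega>))))))) \<in> borel_measurable P"
proof -
  define g where "g \<theta> x = Ff k (Qf c s (overall_channel (fst x) (fst (snd x)) (fst (snd (snd x))) \<theta> (snd (snd (snd x)))))"
    for \<theta> :: "real^'n" and x :: "(complex^'m) \<times> (complex^'n^'m) \<times> (complex^'n) \<times> (real^'n)"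
  define \<Psi> where "\<Psi> x = (SUP \<theta>\<in>phase_set. g \<theta> x)" for x
  have gc: "continuous_on UNIV (g \<theta>)" for \<theta>
    unfolding g_def by (rule continuous_on_compose2[OF Qf_cont[OF c s k] ch_cont]) auto
  have "\<Psi> \<in> borel_measurable borel"
    unfolding borel_measurable_iff_greater
  proof
    fix a
    have bdd: "bdd_above ((\<lambda>\<theta>. g \<theta> x) ` phase_set)" for x
      unfolding g_def by (rule sup_bounds(3)[OF c k s phase_set_ne])
    have "{w \<in> space borel. a < \<Psi> w} = (\<Union>\<theta>\<in>phase_set. {x. a < g \<theta> x})"
      unfolding \<Psi>_def using less_cSUP_iff[OF phase_set_ne bdd] by auto
    also have "open \<dots>"
      by (intro open_UN ballI open_Collect_less continuous_on_const gc)
    then have "(\<Union>\<theta>\<in>phase_set. {x. a < g \<theta> x}) \<in> sets borel" by simp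
    finally show "{w \<in> space borel. a < \<Psi> w} \<in> sets borel" .
  qed
  from measurable_compose[OF X this] show ?thesis by (simp add: \<Psi>_def g_def)
qed


theorem theorem2:
  fixes P :: "'a measure"
    and h_d :: "'a \<Rightarrow> complex^'m::finite"
    and G :: "'a \<Rightarrow> complex^'n::finite^'m"
    and hr :: "'a \<Rightarrow> complex^'n"
    and d\<theta> :: "'a \<Rightarrow> real^'n"
    and Cd :: "complex^'m^'m"
    and Cirs :: "complex^('m \<times> 'n)^('m \<times> 'n)"
    and kBS kUE sigma2 tau_d tau :: real
  assumes "prob_space P"
    and "G \<in> borel_measurable P" and "hr \<in> borel_measurable P"
    and "d\<theta> \<in> borel_measurable P"
    and "complex_gaussian P Cd h_d"
    and "complex_gaussian P Cirs (\<lambda>\<omega>. vec_mat (G \<omega> ** diag_mat (hr \<omega>)))"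
    and "\<And>i. phase_noise P (\<lambda>\<omega>. d\<theta> \<omega> $ i)"
    and "Cd \<noteq> 0 \<or> Cirs \<noteq> 0"
    and "kBS > 0" and "kUE > 0" and "sigma2 > 0"
    and "0 < tau_d" and "tau_d \<le> tau"
  shows "\<exists>L. ((\<lambda>p. C_down P h_d G hr d\<theta> kBS kUE sigma2 tau_d tau p) \<longlongrightarrow> L) at_top \<and>
             tau_d / tau * log 2 (1 + 1 / (kBS + kUE * (1 + kBS))) \<le> L \<and>
             L \<le> tau_d / tau * log 2 (1 + real CARD('m) / (kBS + kUE * (real CARD('m) + kBS)))"
proof -
  note A = assms
  interpret prob_space P by fact
  define c where "c = (1 + kUE) * kBS"
  have c: "c > 0" using A by (simp add: c_def)
  have kUE: "kUE > 0" and s2: "sigma2 > 0" using A by auto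
  define Hc where "Hc \<omega> \<theta> = overall_channel (h_d \<omega>) (G \<omega>) (hr \<omega>) \<theta> (d\<theta> \<omega>)" for \<omega> \<theta>
  define K where "K \<omega> = Max ((\<lambda>\<theta>. kk (Hc \<omega> \<theta>)) ` phase_set)" for \<omega>
  define T where "T \<omega> = Ff kUE (real (K \<omega>) / c)" for \<omega>
  define s where "s t \<omega> = (SUP \<theta>\<in>phase_set. Ff kUE (Qf c (sigma2 / max t 1) (Hc \<omega> \<theta>)))" for t \<omega>
  define Bc where "Bc = Ff kUE (real CARD('m) / c)"
  define X where "X \<omega> = (h_d \<omega>, G \<omega>, hr \<omega>, d\<theta> \<omega>)" for \<omega>
  have hdm: "h_d \<in> borel_measurable P" using A(5) unfolding complex_gaussian_def by blast
  have Xm: "X \<in> borel_measurable P" unfolding X_def using hdm A(2-4) by measurable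
  have quadQ: "quad kBS kUE sigma2 p h = Qf c (sigma2 / p) h" if "p > 0" for p and h :: "complex^'m"
    using quad_eq[OF A(9-11) that] by (simp add: Qf_def c_def)
  have integrand: "(SUP \<theta>\<in>phase_set. (let q = quad kBS kUE sigma2 p (overall_channel (h_d \<omega>) (G \<omega>) (hr \<omega>) \<theta> (d\<theta> \<omega>))
           in log 2 (1 + q / (1 + kUE * q)))) = s p \<omega>" if "p \<ge> 1" for p \<omega>
  proof -
    have "max p 1 = p" using that by simp
    then show ?thesis using that unfolding s_def Hc_def by (simp add: quadQ Ff_def Let_def)
  qed
  have sm: "s t \<in> borel_measurable P" for t
  proof -
    have "sigma2 / max t 1 > 0" using s2 by simp
    from sup_meas[OF Xm c this kUE] show ?thesis unfolding s_def[abs_def] by (simp add: X_def Hc_def)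
  qed
  have Kle: "K \<omega> \<le> CARD('m)" for \<omega>
  proof -
    have "K \<omega> \<in> (\<lambda>\<theta>. kk (Hc \<omega> \<theta>)) ` phase_set" unfolding K_def
      using phase_set_ne kk_fin by (intro Max_in) auto
    then show ?thesis using kk_le by auto
  qed
  have TB: "T \<omega> \<le> Bc" for \<omega>
    unfolding T_def Bc_def using Kle[of \<omega>] c kUE by (intro Ff_mono divide_right_mono) auto
  have slim: "((\<lambda>t. s t \<omega>) \<longlongrightarrow> T \<omega>) at_top" for \<omega>
  proof -
    have L: "((\<lambda>p. SUP \<theta>\<in>phase_set. Ff kUE (Qf c (sigma2 / p) (Hc \<omega> \<theta>))) \<longlongrightarrow> T \<omega>) at_top"
      unfolding T_def K_def by (rule sup_lim[OF c kUE s2 phase_set_ne])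
    have "\<forall>\<^sub>F t in at_top. (SUP \<theta>\<in>phase_set. Ff kUE (Qf c (sigma2 / t) (Hc \<omega> \<theta>))) = s t \<omega>"
      using eventually_ge_at_top[of "1::real"] by eventually_elim (simp add: s_def)
    from tendsto_cong[OF this] L show ?thesis by simp
  qed
  have sbound: "norm (s t \<omega>) \<le> Bc" for t \<omega>
  proof -
    have p: "sigma2 / max t 1 > 0" using s2 by simp
    have "0 \<le> s t \<omega>" "s t \<omega> \<le> T \<omega>"
      using sup_bounds(1,2)[OF c kUE p phase_set_ne, of "Hc \<omega>"] unfolding s_def T_def K_def by auto
    then show ?thesis using TB[of \<omega>] by simp
  qed
  have Tm: "T \<in> borel_measurable P"
  proof (rule borel_measurable_LIMSEQ_real)
    show "(\<lambda>n. s (real n) \<omega>) \<longlonglongrightarrow> T \<omega>" for \<omega>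
      by (rule filterlim_compose[OF slim filterlim_real_sequentially])
  qed (rule sm)
  have conv: "((\<lambda>t. integral\<^sup>L P (s t)) \<longlongrightarrow> integral\<^sup>L P T) at_top"
    by (rule integral_dominated_convergence_at_top[where w="\<lambda>_. Bc"])
       (use Tm sm slim sbound in \<open>auto intro!: always_eventually AE_I2\<close>)
  have T0: "0 \<le> T \<omega>" for \<omega> unfolding T_def using c kUE by (intro Ff_nonneg) auto
  have Tint: "integrable P T"
    using Tm TB T0 by (intro integrable_const_bound[where B=Bc]) (auto intro!: always_eventually sbound
        simp: abs_of_nonneg)
  have vm0: "vec_mat (0::complex^'n^'m) = 0" by (simp add: vec_mat_def vec_eq_iff)
  have nz: "AE \<omega> in P. h_d \<omega> \<noteq> 0 \<or> G \<omega> ** diag_mat (hr \<omega>) \<noteq> 0"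
    using A(8)
  proof
    assume "Cd \<noteq> 0"
    from gauss_nonzero_AE[OF A(1) A(5) this] show ?thesis by eventually_elim auto
  next
    assume "Cirs \<noteq> 0"
    from gauss_nonzero_AE[OF A(1) A(6) this] show ?thesis by eventually_elim (metis vm0)
  qed
  have Tlow: "AE \<omega> in P. Ff kUE (1 / c) \<le> T \<omega>"
    using nz
  proof eventually_elim
    case (elim \<omega>)
    then obtain \<theta> where th: "\<theta> \<in> phase_set" "Hc \<omega> \<theta> \<noteq> 0"
      using ch_nonzero[of "h_d \<omega>" "G \<omega>" "hr \<omega>" "d\<theta> \<omega>"] unfolding Hc_def by blast
    then obtain i where "Hc \<omega> \<theta> $ i \<noteq> 0" by (metis vec_eq_iff zero_index)
    then have "{i. Hc \<omega> \<theta> $ i \<noteq> 0} \<noteq> {}" by auto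
    then have "1 \<le> kk (Hc \<omega> \<theta>)" unfolding kk_def by (simp add: Suc_le_eq card_gt_0_iff)
    also have "kk (Hc \<omega> \<theta>) \<le> K \<omega>" unfolding K_def using th kk_fin by (intro Max_ge) auto
    finally have "1 \<le> real (K \<omega>)" by simp
    then have "1 / c \<le> real (K \<omega>) / c" using c by (intro divide_right_mono) auto
    then show ?case unfolding T_def using c kUE by (intro Ff_mono) auto
  qed
  define L where "L = tau_d / tau * integral\<^sup>L P T"
  have tl: "((\<lambda>p. C_down P h_d G hr d\<theta> kBS kUE sigma2 tau_d tau p) \<longlongrightarrow> L) at_top"
  proof -
    have "\<forall>\<^sub>F p in at_top. tau_d / tau * integral\<^sup>L P (s p) = C_down P h_d G hr d\<theta> kBS kUE sigma2 tau_d tau p"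
      using eventually_ge_at_top[of "1::real"]
    proof eventually_elim
      case (elim p)
      then show ?case unfolding C_down_def using integrand[OF elim] by simp
    qed
    from tendsto_cong[OF this] tendsto_mult_left[OF conv, of "tau_d / tau"] show ?thesis
      by (simp add: L_def)
  qed
  have r: "0 \<le> tau_d / tau" using A by simp
  have lo: "Ff kUE (1 / c) \<le> integral\<^sup>L P T" by (rule integral_ge_const[OF Tint Tlow])
  have up: "integral\<^sup>L P T \<le> Bc" by (rule integral_le_const[OF Tint]) (simp add: TB)
  have e1: "Ff kUE (1 / c) = log 2 (1 + 1 / (kBS + kUE * (1 + kBS)))"
  proof -
    have ck: "c + kUE > 0" using c kUE by simp
    have "(1 / c) / (1 + kUE * (1 / c)) = 1 / (c + kUE)" using c ck by (simp add: field_simps)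
    also have "c + kUE = kBS + kUE * (1 + kBS)" by (simp add: c_def algebra_simps)
    finally show ?thesis unfolding Ff_def by simp
  qed
  have e2: "Bc = log 2 (1 + real CARD('m) / (kBS + kUE * (real CARD('m) + kBS)))"
  proof -
    let ?M = "real CARD('m)"
    have ck: "c + kUE * ?M > 0" using c kUE by (intro add_pos_nonneg) auto
    have "(?M / c) / (1 + kUE * (?M / c)) = ?M / (c + kUE * ?M)" using c ck by (simp add: field_simps)
    also have "c + kUE * ?M = kBS + kUE * (?M + kBS)" by (simp add: c_def algebra_simps)
    finally show ?thesis unfolding Bc_def Ff_def by simp
  qed
  show ?thesis
  proof (intro exI conjI)
    show "((\<lambda>p. C_down P h_d G hr d\<theta> kBS kUE sigma2 tau_d tau p) \<longlongrightarrow> L) at_top" by (rule tl)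
    show "tau_d / tau * log 2 (1 + 1 / (kBS + kUE * (1 + kBS))) \<le> L"
      unfolding L_def e1[symmetric] using lo r by (rule mult_left_mono)
    show "L \<le> tau_d / tau * log 2 (1 + real CARD('m) / (kBS + kUE * (real CARD('m) + kBS)))"
      unfolding L_def e2[symmetric] using up r by (rule mult_left_mono)
  qed
qed

end
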